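(* Under the standing assumptions of the setup, suppose additionally that for some $\delta\ge 0$ and all $(v,w)$, \[ \big|\mathbb{E}(Y^1-Y^0\mid V=v,W=w,E=1)-\mathbb{E}(Y^1-Y^0\mid V=v,E=1)\big|\le\delta . \] Let $\theta(v)=\mu_1(v)-\mu_0(v)$. Then for every $(v,w)$ with $\nu(v,w)>0$, \[ \max\left\{\frac{\theta(v)-(\theta(v)+\delta)(1-\nu(v,w))}{\nu(v,w)},\,\theta(v)-\delta\right\}\le \mathbb{E}(Y^1-Y^0\mid V=v,W=w,E=1)\le \min\left\{\frac{\theta(v)-(\theta(v)-\delta)(1-\nu(v,w))}{\nu(v,w)},\,\theta(v)+\delta\right\}. \]
   Context: Setup: there are random variables $V$, $W$ (taking finitely many values), a population indicator $E\in\{0,1\}$ ($E=1$: study, $E=0$: target), treatment $A\in\{0,1\}$, potential outcomes $Y^1,Y^0\in[a,b]$ a.s., and $Y=Y^A$. Assume $A\perp\!\!\!\perp (Y^0,Y^1)\mid V,E=1$; positivity $\mathbb{P}(A=a'\mid V,W)>0$; (1) $\mathbb{P}(W=w\mid V=v,E=1)=\mathbb{P}(W=w\mid V=v,E=0)$; (2) $\mathbb{E}(Y^1-Y^0\mid V,W,E=1)=\mathbb{E}(Y^1-Y^0\mid V,W,E=0)$. Notation: $\mu_{a'}(v)=\mathbb{E}(Y\mid V=v,A=a',E=1)$, $\nu(v,w)=\mathbb{P}(W=w\mid V=v,E=0)$. (The bounds are those of the worst-case identification result with the extreme values $b-a$ and $a-b$ of $Y^1-Y^0$ replaced by $\theta(v)+\delta$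 and $\theta(v)-\delta$.) *)

theory Defs
  imports "HOL-Probability.Probability"
begin

text \<open>Elementary conditioning on an event C of positive probability
  (division convention x / 0 = 0 otherwise).\<close>

definition ev :: "'a measure \<Rightarrow> ('a \<Rightarrow> bool) \<Rightarrow> 'a set" where
  "ev M P = {\<omega> \<in> space M. P \<omega>}"

definition cprob :: "'a measure \<Rightarrow> ('a \<Rightarrow> bool) \<Rightarrow> ('a \<Rightarrow> bool) \<Rightarrow> real" where
  "cprob M P C = measure M (ev M (\<lambda>\<omega>. P \<omega> \<and> C \<omega>)) / measure M (ev M C)"

definition cexp :: "'a measure \<Rightarrow> ('a \<Rightarrow> real) \<Rightarrow> ('a \<Rightarrow> bool) \<Rightarrow> real" where
  "cexp M X C = (\<integral>\<omega>. indicator (ev M C) \<omega> * X \<omega> \<partial>M) / measure M (ev M C)"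

definition mu :: "'a measure \<Rightarrow> ('a \<Rightarrow> 'v) \<Rightarrow> ('a \<Rightarrow> bool) \<Rightarrow> ('a \<Rightarrow> bool) \<Rightarrow> ('a \<Rightarrow> real)
    \<Rightarrow> bool \<Rightarrow> 'v \<Rightarrow> real" where
  "mu M V A E Y a' v = cexp M Y (\<lambda>\<omega>. V \<omega> = v \<and> A \<omega> = a' \<and> E \<omega>)"

definition nu :: "'a measure \<Rightarrow> ('a \<Rightarrow> 'v) \<Rightarrow> ('a \<Rightarrow> 'w) \<Rightarrow> ('a \<Rightarrow> bool) \<Rightarrow> 'v \<Rightarrow> 'w \<Rightarrow> real" where
  "nu M V W E v w = cprob M (\<lambda>\<omega>. W \<omega> = w) (\<lambda>\<omega>. V \<omega> = v \<and> \<not> E \<omega>)"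

end

theory Submission
  imports Defs
begin

lemma ign_int:
  fixes g :: "'a \<Rightarrow> real \<times> real" and h :: "real \<times> real \<Rightarrow> real"
  assumes P: "prob_space M" and g[measurable]: "g \<in> M \<rightarrow>\<^sub>M borel \<Otimes>\<^sub>M borel"
    and B[measurable]: "B \<in> sets M" and C[measurable]: "C \<in> sets M"
    and eq: "\<And>S. S \<in> sets (borel \<Otimes>\<^sub>M borel) \<Longrightarrow>
       measure M (g -` S \<inter> space M \<inter> B) * measure M C = measure M B * measure M (g -` S \<inter> space M \<inter> C)"
    and h[measurable]: "h \<in> borel_measurable (borel \<Otimes>\<^sub>M borel)"
  shows "measure M C * (\<integral>\<omega>. indicator B \<omega> * h (g \<omega>) \<partial>M) = measure M B * (\<integral>\<omega>. indicator C \<omega> * h (g \<omega>) \<partial>M)"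
proof -
  interpret prob_space M by (rule P)
  define cB where "cB = measure M C"
  define cC where "cC = measure M B"
  have cB0: "cB \<ge> 0" "cC \<ge> 0" unfolding cB_def cC_def by auto
  define N1 where "N1 = distr (density M (\<lambda>\<omega>. ennreal (cB * indicator B \<omega>))) (borel \<Otimes>\<^sub>M borel) g"
  define N2 where "N2 = distr (density M (\<lambda>\<omega>. ennreal (cC * indicator C \<omega>))) (borel \<Otimes>\<^sub>M borel) g"
  have em: "emeasure (distr (density M (\<lambda>\<omega>. ennreal (c * indicator D \<omega>))) (borel \<Otimes>\<^sub>M borel) g) S
      = ennreal (c * measure M (g -` S \<inter> space M \<inter> D))"
    if "S \<in> sets (borel \<Otimes>\<^sub>M borel)" "D \<in> sets M" "c \<ge> 0" for S D c
  proof -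
    have m: "g \<in> density M (\<lambda>\<omega>. ennreal (c * indicator D \<omega>)) \<rightarrow>\<^sub>M borel \<Otimes>\<^sub>M borel"
      by (simp add: measurable_cong_sets[OF sets_density refl])
    have "emeasure (distr (density M (\<lambda>\<omega>. ennreal (c * indicator D \<omega>))) (borel \<Otimes>\<^sub>M borel) g) S
       = emeasure (density M (\<lambda>\<omega>. ennreal (c * indicator D \<omega>))) (g -` S \<inter> space M)"
      using that m by (simp add: emeasure_distr)
    also have "\<dots> = (\<integral>\<^sup>+ \<omega>. ennreal (c * indicator D \<omega>) * indicator (g -` S \<inter> space M) \<omega> \<partial>M)"
      using that by (intro emeasure_density) auto
    also have "\<dots> = (\<integral>\<^sup>+ \<omega>. ennreal c * indicator (g -` S \<inter> space M \<inter> D) \<omega> \<partial>M)"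
      by (intro nn_integral_cong) (auto split: split_indicator)
    also have "\<dots> = ennreal c * emeasure M (g -` S \<inter> space M \<inter> D)"
      using that by (intro nn_integral_cmult_indicator) auto
    also have "\<dots> = ennreal (c * measure M (g -` S \<inter> space M \<inter> D))"
      using that by (simp add: emeasure_eq_measure ennreal_mult)
    finally show ?thesis .
  qed
  have "N1 = N2"
  proof (rule measure_eqI)
    show "sets N1 = sets N2" unfolding N1_def N2_def by simp
    fix S assume "S \<in> sets N1"
    then have S: "S \<in> sets (borel \<Otimes>\<^sub>M borel)" unfolding N1_def by simp
    show "emeasure N1 S = emeasure N2 S"
      unfolding N1_def N2_def using em[OF S B cB0(1)] em[OF S C cB0(2)] eq[OF S]
      by (simp add: cB_def cC_def mult.commute)
  qed
  have int: "integral\<^sup>L (distr (density M (\<lambda>\<omega>. ennreal (c * indicator D \<omega>))) (borel \<Otimes>\<^sub>M borel) g) h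
      = c * (\<integral>\<omega>. indicator D \<omega> * h (g \<omega>) \<partial>M)"
    if "D \<in> sets M" "c \<ge> 0" for D c
  proof -
    have m: "g \<in> density M (\<lambda>\<omega>. ennreal (c * indicator D \<omega>)) \<rightarrow>\<^sub>M borel \<Otimes>\<^sub>M borel"
      by (simp add: measurable_cong_sets[OF sets_density refl])
    have "integral\<^sup>L (distr (density M (\<lambda>\<omega>. ennreal (c * indicator D \<omega>))) (borel \<Otimes>\<^sub>M borel) g) h
       = integral\<^sup>L (density M (\<lambda>\<omega>. ennreal (c * indicator D \<omega>))) (\<lambda>\<omega>. h (g \<omega>))"
      by (rule integral_distr[OF m h])
    also have "\<dots> = (\<integral>\<omega>. (c * indicator D \<omega>) *\<^sub>R h (g \<omega>) \<partial>M)"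
      using that by (intro integral_density) auto
    also have "\<dots> = (\<integral>\<omega>. c * (indicator D \<omega> * h (g \<omega>)) \<partial>M)"
      by (simp only: real_scaleR_def mult.assoc)
    also have "\<dots> = c * (\<integral>\<omega>. indicator D \<omega> * h (g \<omega>) \<partial>M)"
      by (rule integral_mult_right_zero)
    finally show ?thesis .
  qed
  show ?thesis
    using int[OF B cB0(1)] int[OF C cB0(2)] \<open>N1 = N2\<close> unfolding N1_def N2_def cB_def cC_def
    by simp
qed

lemma alg:
  fixes pC pw Q Iw R \<theta> \<delta> :: real
  assumes "pw > 0" "Q \<ge> 0" "pC = pw + Q" "\<theta> * pC = Iw + R" "Q * (\<theta> - \<delta>) \<le> R" "R \<le> Q * (\<theta> + \<delta>)"
    "\<bar>Iw / pw - \<theta>\<bar> \<le> \<delta>"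
  shows "max ((\<theta> - (\<theta> + \<delta>) * (1 - pw/pC)) / (pw/pC)) (\<theta> - \<delta>) \<le> Iw/pw
          \<and> Iw/pw \<le> min ((\<theta> - (\<theta> - \<delta>) * (1 - pw/pC)) / (pw/pC)) (\<theta> + \<delta>)"
proof -
  define t where "t = Iw / pw"
  have Iw: "Iw = t * pw" unfolding t_def using assms(1) by simp
  have pC: "pC > 0" using assms(1,2,3) by linarith
  have gen: "(x - y * (1 - pw/pC)) / (pw/pC) = (x * pC - y * (pC - pw)) / pw" for x y
    using pC assms(1) by (simp add: field_simps)
  have Qe: "pC - pw = Q" using assms(3) by simp
  have e1: "(\<theta> - (\<theta> + \<delta>) * (1 - pw/pC)) / (pw/pC) = (\<theta> * pC - (\<theta> + \<delta>) * Q) / pw"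
    using gen Qe by simp
  have e2: "(\<theta> - (\<theta> - \<delta>) * (1 - pw/pC)) / (pw/pC) = (\<theta> * pC - (\<theta> - \<delta>) * Q) / pw"
    using gen Qe by simp
  have "(\<theta> * pC - (\<theta> + \<delta>) * Q) / pw \<le> t"
    using assms(1,4,6) Iw by (simp add: divide_le_eq algebra_simps)
  moreover have "t \<le> (\<theta> * pC - (\<theta> - \<delta>) * Q) / pw"
    using assms(1,4,5) Iw by (simp add: le_divide_eq algebra_simps)
  ultimately show ?thesis unfolding e1 e2 t_def[symmetric] using assms(7) t_def by auto
qed

theorem mainTheorem3:
  fixes M :: "'a measure" and V :: "'a \<Rightarrow> 'v" and W :: "'a \<Rightarrow> 'w"
    and E A :: "'a \<Rightarrow> bool" and Y1 Y0 Y :: "'a \<Rightarrow> real" and a b \<delta> :: real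
  assumes prob: "prob_space M"
    and V_meas: "V \<in> M \<rightarrow>\<^sub>M count_space UNIV" and V_fin: "finite (V ` space M)"
    and W_meas: "W \<in> M \<rightarrow>\<^sub>M count_space UNIV" and W_fin: "finite (W ` space M)"
    and E_meas: "E \<in> M \<rightarrow>\<^sub>M count_space UNIV"
    and A_meas: "A \<in> M \<rightarrow>\<^sub>M count_space UNIV"
    and Y1_meas: "Y1 \<in> borel_measurable M" and Y0_meas: "Y0 \<in> borel_measurable M"
    and Y1_bd: "AE \<omega> in M. a \<le> Y1 \<omega> \<and> Y1 \<omega> \<le> b"
    and Y0_bd: "AE \<omega> in M. a \<le> Y0 \<omega> \<and> Y0 \<omega> \<le> b"
    and Y_def: "\<And>\<omega>. Y \<omega> = (if A \<omega> then Y1 \<omega> else Y0 \<omega>)"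
    and ignorability: "\<And>v a' S. S \<in> sets (borel \<Otimes>\<^sub>M borel) \<Longrightarrow>
        measure M (ev M (\<lambda>\<omega>. A \<omega> = a' \<and> (Y0 \<omega>, Y1 \<omega>) \<in> S \<and> V \<omega> = v \<and> E \<omega>))
          * measure M (ev M (\<lambda>\<omega>. V \<omega> = v \<and> E \<omega>))
        = measure M (ev M (\<lambda>\<omega>. A \<omega> = a' \<and> V \<omega> = v \<and> E \<omega>))
          * measure M (ev M (\<lambda>\<omega>. (Y0 \<omega>, Y1 \<omega>) \<in> S \<and> V \<omega> = v \<and> E \<omega>))"
    and positivity: "\<And>v w a'. measure M (ev M (\<lambda>\<omega>. V \<omega> = v \<and> W \<omega> = w \<and> E \<omega>)) > 0 \<Longrightarrow>
        cprob M (\<lambda>\<omega>. A \<omega> = a') (\<lambda>\<omega>. V \<omega> = v \<and> W \<omega> = w \<and> E \<omega>) > 0"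
    and transport_W: "\<And>v w. measure M (ev M (\<lambda>\<omega>. V \<omega> = v \<and> \<not> E \<omega>)) > 0 \<Longrightarrow>
        cprob M (\<lambda>\<omega>. W \<omega> = w) (\<lambda>\<omega>. V \<omega> = v \<and> E \<omega>)
        = cprob M (\<lambda>\<omega>. W \<omega> = w) (\<lambda>\<omega>. V \<omega> = v \<and> \<not> E \<omega>)"
    and transport_effect: "\<And>v w. measure M (ev M (\<lambda>\<omega>. V \<omega> = v \<and> W \<omega> = w \<and> E \<omega>)) > 0 \<Longrightarrow>
        measure M (ev M (\<lambda>\<omega>. V \<omega> = v \<and> W \<omega> = w \<and> \<not> E \<omega>)) > 0 \<Longrightarrow>
        cexp M (\<lambda>\<omega>. Y1 \<omega> - Y0 \<omega>) (\<lambda>\<omega>. V \<omega> = v \<and> W \<omega> = w \<and> E \<omega>)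
        = cexp M (\<lambda>\<omega>. Y1 \<omega> - Y0 \<omega>) (\<lambda>\<omega>. V \<omega> = v \<and> W \<omega> = w \<and> \<not> E \<omega>)"
    and delta_nonneg: "\<delta> \<ge> 0"
    and delta_bd: "\<And>v w. measure M (ev M (\<lambda>\<omega>. V \<omega> = v \<and> W \<omega> = w \<and> E \<omega>)) > 0 \<Longrightarrow>
        \<bar>cexp M (\<lambda>\<omega>. Y1 \<omega> - Y0 \<omega>) (\<lambda>\<omega>. V \<omega> = v \<and> W \<omega> = w \<and> E \<omega>)
         - cexp M (\<lambda>\<omega>. Y1 \<omega> - Y0 \<omega>) (\<lambda>\<omega>. V \<omega> = v \<and> E \<omega>)\<bar> \<le> \<delta>"
    and nu_pos: "nu M V W E v w > 0"
  shows "let \<theta> = mu M V A E Y True v - mu M V A E Y False v;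
             \<nu> = nu M V W E v w;
             \<tau> = cexp M (\<lambda>\<omega>. Y1 \<omega> - Y0 \<omega>) (\<lambda>\<omega>. V \<omega> = v \<and> W \<omega> = w \<and> E \<omega>)
         in max ((\<theta> - (\<theta> + \<delta>) * (1 - \<nu>)) / \<nu>) (\<theta> - \<delta>) \<le> \<tau>
          \<and> \<tau> \<le> min ((\<theta> - (\<theta> - \<delta>) * (1 - \<nu>)) / \<nu>) (\<theta> + \<delta>)"
proof -
  interpret prob_space M by (rule prob)
  note [measurable] = V_meas W_meas E_meas A_meas Y1_meas Y0_meas
  have evm: "\<And>P. Measurable.pred M P \<Longrightarrow> ev M P \<in> sets M"
    unfolding ev_def by measurable
  define C where "C = ev M (\<lambda>\<omega>. V \<omega> = v \<and> E \<omega>)"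
  define Cw where "Cw w' = ev M (\<lambda>\<omega>. V \<omega> = v \<and> W \<omega> = w' \<and> E \<omega>)" for w'
  define CA where "CA a' = ev M (\<lambda>\<omega>. V \<omega> = v \<and> A \<omega> = a' \<and> E \<omega>)" for a'
  define D where "D \<omega> = Y1 \<omega> - Y0 \<omega>" for \<omega>
  have C_s[measurable]: "C \<in> sets M" unfolding C_def by (intro evm) measurable
  have Cw_s[measurable]: "Cw w' \<in> sets M" for w' unfolding Cw_def by (intro evm) measurable
  have CA_s[measurable]: "CA a' \<in> sets M" for a' unfolding CA_def by (intro evm) measurable
  have intY1: "integrable M Y1"
    by (rule integrable_const_bound[where B="\<bar>a\<bar> + \<bar>b\<bar>"]) (use Y1_bd in \<open>eventually_elim, auto\<close>)
  have intY0: "integrable M Y0"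
    by (rule integrable_const_bound[where B="\<bar>a\<bar> + \<bar>b\<bar>"]) (use Y0_bd in \<open>eventually_elim, auto\<close>)
  have intD: "integrable M D" unfolding D_def using intY1 intY0 by auto
  have intI: "integrable M (\<lambda>\<omega>. indicator S \<omega> * f \<omega>)" if "S \<in> sets M" "integrable M f" for S and f :: "'a \<Rightarrow> real"
    using integrable_mult_indicator[OF that] by simp
  have PE0: "measure M (ev M (\<lambda>\<omega>. V \<omega> = v \<and> \<not> E \<omega>)) > 0"
  proof -
    have "measure M (ev M (\<lambda>\<omega>. V \<omega> = v \<and> \<not> E \<omega>)) \<noteq> 0"
      using nu_pos unfolding nu_def cprob_def by auto
    then show ?thesis using measure_nonneg[of M] by (simp add: less_le)
  qed
  have ev1: "ev M (\<lambda>\<omega>. W \<omega> = w \<and> V \<omega> = v \<and> E \<omega>) = Cw w" unfolding Cw_def ev_def by auto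
  have nuEq: "nu M V W E v w = measure M (Cw w) / measure M C"
    using transport_W[OF PE0, of w] unfolding nu_def cprob_def C_def ev1 by simp
  have pC: "measure M C > 0" and pw: "measure M (Cw w) > 0"
    using nu_pos unfolding nuEq by (auto simp: zero_less_divide_iff less_le)
  have pCA: "measure M (CA a') > 0" for a'
  proof -
    have "cprob M (\<lambda>\<omega>. A \<omega> = a') (\<lambda>\<omega>. V \<omega> = v \<and> W \<omega> = w \<and> E \<omega>) > 0"
      using positivity pw unfolding Cw_def by blast
    then have "measure M (ev M (\<lambda>\<omega>. A \<omega> = a' \<and> V \<omega> = v \<and> W \<omega> = w \<and> E \<omega>)) > 0"
      unfolding cprob_def by (auto simp: zero_less_divide_iff)
    also have "\<dots> \<le> measure M (CA a')"
      unfolding CA_def by (intro finite_measure_mono evm) (auto simp: ev_def)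
    finally show ?thesis .
  qed
  define g where "g \<omega> = (Y0 \<omega>, Y1 \<omega>)" for \<omega>
  have g_m[measurable]: "g \<in> M \<rightarrow>\<^sub>M borel \<Otimes>\<^sub>M borel" unfolding g_def by measurable
  have ign: "measure M C * (\<integral>\<omega>. indicator (CA a') \<omega> * h (g \<omega>) \<partial>M)
      = measure M (CA a') * (\<integral>\<omega>. indicator C \<omega> * h (g \<omega>) \<partial>M)"
    if h: "h \<in> borel_measurable (borel \<Otimes>\<^sub>M borel)" for a' h
  proof (rule ign_int[OF prob g_m CA_s C_s _ h])
    fix S :: "(real \<times> real) set" assume S: "S \<in> sets (borel \<Otimes>\<^sub>M borel)"
    have e1: "ev M (\<lambda>\<omega>. A \<omega> = a' \<and> (Y0 \<omega>, Y1 \<omega>) \<in> S \<and> V \<omega> = v \<and> E \<omega>) = g -` S \<inter> space M \<inter> CA a'"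
      unfolding CA_def ev_def g_def by auto
    have e2: "ev M (\<lambda>\<omega>. (Y0 \<omega>, Y1 \<omega>) \<in> S \<and> V \<omega> = v \<and> E \<omega>) = g -` S \<inter> space M \<inter> C"
      unfolding C_def ev_def g_def by auto
    have e3: "ev M (\<lambda>\<omega>. A \<omega> = a' \<and> V \<omega> = v \<and> E \<omega>) = CA a'"
      unfolding CA_def ev_def by auto
    show "measure M (g -` S \<inter> space M \<inter> CA a') * measure M C = measure M (CA a') * measure M (g -` S \<inter> space M \<inter> C)"
      using ignorability[OF S, of a' v] unfolding e1 e2 e3 C_def by simp
  qed
  have mu1: "mu M V A E Y True v = (\<integral>\<omega>. indicator C \<omega> * Y1 \<omega> \<partial>M) / measure M C"
  proof -
    have "(\<integral>\<omega>. indicator (CA True) \<omega> * Y \<omega> \<partial>M) = (\<integral>\<omega>. indicator (CA True) \<omega> * snd (g \<omega>) \<partial>M)"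
      by (rule Bochner_Integration.integral_cong[OF refl]) (auto simp: CA_def ev_def Y_def g_def split: split_indicator)
    moreover have "measure M C * (\<integral>\<omega>. indicator (CA True) \<omega> * snd (g \<omega>) \<partial>M)
      = measure M (CA True) * (\<integral>\<omega>. indicator C \<omega> * Y1 \<omega> \<partial>M)"
      using ign[of snd True] by (simp add: g_def)
    ultimately show ?thesis using pC pCA[of True]
      unfolding mu_def cexp_def CA_def[symmetric] by (simp add: field_simps)
  qed
  have mu0: "mu M V A E Y False v = (\<integral>\<omega>. indicator C \<omega> * Y0 \<omega> \<partial>M) / measure M C"
  proof -
    have "(\<integral>\<omega>. indicator (CA False) \<omega> * Y \<omega> \<partial>M) = (\<integral>\<omega>. indicator (CA False) \<omega> * fst (g \<omega>) \<partial>M)"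
      by (rule Bochner_Integration.integral_cong[OF refl]) (auto simp: CA_def ev_def Y_def g_def split: split_indicator)
    moreover have "measure M C * (\<integral>\<omega>. indicator (CA False) \<omega> * fst (g \<omega>) \<partial>M)
      = measure M (CA False) * (\<integral>\<omega>. indicator C \<omega> * Y0 \<omega> \<partial>M)"
      using ign[of fst False] by (simp add: g_def)
    ultimately show ?thesis using pC pCA[of False]
      unfolding mu_def cexp_def CA_def[symmetric] by (simp add: field_simps)
  qed
  define \<theta> where "\<theta> = mu M V A E Y True v - mu M V A E Y False v"
  have th: "\<theta> = (\<integral>\<omega>. indicator C \<omega> * D \<omega> \<partial>M) / measure M C"
  proof -
    have "(\<integral>\<omega>. indicator C \<omega> * D \<omega> \<partial>M) = (\<integral>\<omega>. indicator C \<omega> * Y1 \<omega> - indicator C \<omega> * Y0 \<omega> \<partial>M)"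
      by (rule Bochner_Integration.integral_cong[OF refl]) (auto simp: D_def algebra_simps)
    also have "\<dots> = (\<integral>\<omega>. indicator C \<omega> * Y1 \<omega> \<partial>M) - (\<integral>\<omega>. indicator C \<omega> * Y0 \<omega> \<partial>M)"
      by (intro Bochner_Integration.integral_diff intI C_s intY1 intY0)
    finally show ?thesis unfolding \<theta>_def mu1 mu0 by (simp add: diff_divide_distrib)
  qed
  have cexpC: "cexp M (\<lambda>\<omega>. Y1 \<omega> - Y0 \<omega>) (\<lambda>\<omega>. V \<omega> = v \<and> E \<omega>) = \<theta>"
    unfolding th cexp_def C_def D_def by simp
  define WS where "WS = W ` space M"
  have decomp: "(\<integral>\<omega>. indicator C \<omega> * f \<omega> \<partial>M) = (\<Sum>w'\<in>WS. \<integral>\<omega>. indicator (Cw w') \<omega> * f \<omega> \<partial>M)"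
    if f: "integrable M f" for f :: "'a \<Rightarrow> real"
  proof -
    have "(\<integral>\<omega>. indicator C \<omega> * f \<omega> \<partial>M) = (\<integral>\<omega>. (\<Sum>w'\<in>WS. indicator (Cw w') \<omega> * f \<omega>) \<partial>M)"
    proof (rule Bochner_Integration.integral_cong[OF refl])
      fix \<omega> assume \<omega>: "\<omega> \<in> space M"
      have "(\<Sum>w'\<in>WS. indicator (Cw w') \<omega> * f \<omega>) = (\<Sum>w'\<in>WS. if w' = W \<omega> then indicator C \<omega> * f \<omega> else 0)"
        by (intro sum.cong refl) (auto simp: Cw_def C_def ev_def \<omega> split: split_indicator)
      also have "\<dots> = indicator C \<omega> * f \<omega>" using \<omega> W_fin by (simp add: WS_def)
      finally show "indicator C \<omega> * f \<omega> = (\<Sum>w'\<in>WS. indicator (Cw w') \<omega> * f \<omega>)" by simp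
    qed
    also have "\<dots> = (\<Sum>w'\<in>WS. \<integral>\<omega>. indicator (Cw w') \<omega> * f \<omega> \<partial>M)"
      by (intro Bochner_Integration.integral_sum intI Cw_s f)
    finally show ?thesis .
  qed
  define I where "I w' = (\<integral>\<omega>. indicator (Cw w') \<omega> * D \<omega> \<partial>M)" for w'
  define P where "P w' = measure M (Cw w')" for w'
  have sumI: "\<theta> * measure M C = (\<Sum>w'\<in>WS. I w')"
    using decomp[OF intD] pC unfolding th I_def by simp
  have sumP: "measure M C = (\<Sum>w'\<in>WS. P w')"
    using decomp[of "\<lambda>_. 1"] unfolding P_def by simp
  have bnd: "P w' * (\<theta> - \<delta>) \<le> I w' \<and> I w' \<le> P w' * (\<theta> + \<delta>)" for w'
  proof (cases "P w' > 0")
    case True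
    have "\<bar>I w' / P w' - \<theta>\<bar> \<le> \<delta>"
      using delta_bd[of v w'] True cexpC unfolding P_def I_def Cw_def cexp_def D_def by simp
    then have "\<theta> - \<delta> \<le> I w' / P w'" "I w' / P w' \<le> \<theta> + \<delta>" by auto
    then show ?thesis using True by (simp add: pos_le_divide_eq pos_divide_le_eq mult.commute)
  next
    case False
    then have "P w' = 0" unfolding P_def using measure_nonneg[of M "Cw w'"] by linarith
    then have "Cw w' \<in> null_sets M" unfolding P_def
      by (intro null_setsI) (auto simp: emeasure_eq_measure)
    then have "AE \<omega> in M. \<omega> \<notin> Cw w'" by (rule AE_not_in)
    then have "I w' = (\<integral>\<omega>. 0 \<partial>M)" unfolding I_def
      by (intro integral_cong_AE borel_measurable_integrable[OF intI[OF Cw_s intD]])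
         (auto elim!: eventually_mono split: split_indicator)
    then show ?thesis using \<open>P w' = 0\<close> by simp
  qed
  have wWS: "w \<in> WS"
  proof -
    have "Cw w \<noteq> {}" using pw by auto
    then show ?thesis unfolding WS_def Cw_def ev_def by auto
  qed
  have finWS: "finite WS" using W_fin WS_def by simp
  have s1: "(\<Sum>w'\<in>WS. I w') = I w + (\<Sum>w'\<in>WS - {w}. I w')"
    using finWS wWS by (simp add: sum.remove)
  have s2: "(\<Sum>w'\<in>WS. P w') = P w + (\<Sum>w'\<in>WS - {w}. P w')"
    using finWS wWS by (simp add: sum.remove)
  have r1: "(\<Sum>w'\<in>WS - {w}. P w') * (\<theta> - \<delta>) \<le> (\<Sum>w'\<in>WS - {w}. I w')"
    unfolding sum_distrib_right using bnd by (intro sum_mono) auto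
  have r2: "(\<Sum>w'\<in>WS - {w}. I w') \<le> (\<Sum>w'\<in>WS - {w}. P w') * (\<theta> + \<delta>)"
    unfolding sum_distrib_right using bnd by (intro sum_mono) auto
  have Q0: "(\<Sum>w'\<in>WS - {w}. P w') \<ge> 0" unfolding P_def by (intro sum_nonneg) auto
  have tb: "\<bar>I w / P w - \<theta>\<bar> \<le> \<delta>"
    using delta_bd[of v w] pw cexpC unfolding P_def I_def Cw_def cexp_def D_def by simp
  have nuP: "nu M V W E v w = P w / measure M C" unfolding nuEq P_def ..
  have tau: "cexp M (\<lambda>\<omega>. Y1 \<omega> - Y0 \<omega>) (\<lambda>\<omega>. V \<omega> = v \<and> W \<omega> = w \<and> E \<omega>) = I w / P w"
    unfolding cexp_def I_def P_def Cw_def D_def ..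
  have "max ((\<theta> - (\<theta> + \<delta>) * (1 - P w / measure M C)) / (P w / measure M C)) (\<theta> - \<delta>) \<le> I w / P w
          \<and> I w / P w \<le> min ((\<theta> - (\<theta> - \<delta>) * (1 - P w / measure M C)) / (P w / measure M C)) (\<theta> + \<delta>)"
    by (rule alg[OF pw[folded P_def] Q0 _ _ r1 r2 tb])
       (use sumP s2 sumI s1 in auto)
  then show ?thesis unfolding Let_def nuP tau \<theta>_def[symmetric] .
qed

end
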